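(* For any positive integer $m$, there is an ancient curve shortening flow $\{\gamma_t\}_{t\in(-\infty,0)}\subset\mathbb{R}^{2m}$ that does not lie in any $(2m-1)$-dimensional Euclidean subspace and whose tangent flow as $t\to0$ (i.e. the limit of $\frac{\gamma_t}{\sqrt{-t}}$ as $t\to0$) is the embedded (multiplicity one) circle.
   Context: Curve shortening flow is one-dimensional mean curvature flow $\partial_tx=-\vec H$; ancient means defined for all $t\in(-\infty,0)$. *)

theory Defs
  imports "HOL-Analysis.Analysis"
begin

text \<open>Curvature vector of a regular parametrised curve at a point where the
  velocity is v and the acceleration is a:  kappa = (a - (a.T)T)/|v|^2 with T = v/|v|,
  i.e. the second derivative with respect to arclength.\<close>
definition curvature_vector :: "'a::real_inner \<Rightarrow> 'a \<Rightarrow> 'a" where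
  "curvature_vector v a = (1 / (norm v)\<^sup>2) *\<^sub>R (a - ((a \<bullet> v) / (norm v)\<^sup>2) *\<^sub>R v)"

text \<open>An ancient curve shortening flow of closed curves: gamma t is a 1-periodic,
  regular (immersed) closed curve for each time t < 0, C^2 in the curve parameter,
  C^1 in time, jointly continuous, and dgamma/dt equals the curvature vector
  (i.e. dx/dt = -H).\<close>
definition ancient_closed_csf :: "(real \<Rightarrow> real \<Rightarrow> 'a::euclidean_space) \<Rightarrow> bool" where
  "ancient_closed_csf \<gamma> \<longleftrightarrow>
     continuous_on ({..<0} \<times> UNIV) (\<lambda>(t,u). \<gamma> t u) \<and>
     (\<forall>t<0. \<forall>u. \<gamma> t (u + 1) = \<gamma> t u) \<and>
     (\<exists>\<gamma>u \<gamma>uu \<gamma>t. \<forall>t<0. \<forall>u.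
        ((\<lambda>u. \<gamma> t u) has_vector_derivative \<gamma>u t u) (at u) \<and>
        ((\<lambda>u. \<gamma>u t u) has_vector_derivative \<gamma>uu t u) (at u) \<and>
        ((\<lambda>s. \<gamma> s u) has_vector_derivative \<gamma>t t u) (at t) \<and>
        \<gamma>u t u \<noteq> 0 \<and>
        \<gamma>t t u = curvature_vector (\<gamma>u t u) (\<gamma>uu t u))"

text \<open>The round circle of radius sqrt 2 (radius of the shrinking circle sqrt(-2t) rescaled by sqrt(-t), for
  dx/dt = kappa) in the plane spanned by orthonormal e1, e2, traversed once.\<close>
definition circle_param :: "'a::real_inner \<Rightarrow> 'a \<Rightarrow> real \<Rightarrow> 'a" where
  "circle_param e1 e2 u = sqrt 2 *\<^sub>R (cos (2*pi*u) *\<^sub>R e1 + sin (2*pi*u) *\<^sub>R e2)"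

text \<open>Tangent flow at t -> 0 (blow-up centred at the origin) is the multiplicity-one
  circle: after a degree-one reparametrisation, gamma t / sqrt(-t) converges in C^1,
  uniformly in the parameter, to the circle traversed exactly once.\<close>
definition tangent_flow_is_circle :: "(real \<Rightarrow> real \<Rightarrow> 'a::euclidean_space) \<Rightarrow> bool" where
  "tangent_flow_is_circle \<gamma> \<longleftrightarrow>
     (\<exists>e1 e2 \<phi> \<psi>'. norm e1 = 1 \<and> norm e2 = 1 \<and> e1 \<bullet> e2 = 0 \<and>
        (\<forall>t<0. strict_mono (\<phi> t) \<and> continuous_on UNIV (\<phi> t) \<and>
                (\<forall>u. \<phi> t (u + 1) = \<phi> t u + 1) \<and>
                (\<forall>u. ((\<lambda>u. (1 / sqrt (-t)) *\<^sub>R \<gamma> t (\<phi> t u)) has_vector_derivative \<psi>' t u) (at u))) \<and>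
        (\<forall>\<epsilon>>0. \<exists>\<delta>>0. \<forall>t. -\<delta> < t \<and> t < 0 \<longrightarrow> (\<forall>u.
            norm ((1 / sqrt (-t)) *\<^sub>R \<gamma> t (\<phi> t u) - circle_param e1 e2 u) < \<epsilon> \<and>
            norm (\<psi>' t u - vector_derivative (circle_param e1 e2) (at u)) < \<epsilon>)))"

end

theory Submission
  imports Defs
begin



definition lam :: "nat \<Rightarrow> real" where "lam k = (2*pi*real k)^2"
definition Tf :: "nat \<Rightarrow> real \<Rightarrow> real" where
  "Tf m x = -(1/2) * (\<Sum>k\<in>{1..m}. exp(-2*lam k*x))"
definition Df :: "nat \<Rightarrow> real \<Rightarrow> real" where
  "Df m x = (\<Sum>k\<in>{1..m}. lam k * exp(-2*lam k*x))"
definition sig :: "nat \<Rightarrow> real \<Rightarrow> real" where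
  "sig m t = (THE x. Tf m x = t)"

lemma lam_pos: "k \<ge> 1 \<Longrightarrow> lam k > 0"
  by (simp add: lam_def)

lemma lam_mono: assumes "k < l" shows "lam k < lam l"
proof -
  have a: "2*pi*real k < 2*pi*real l" using assms by simp
  have b: "0 \<le> 2*pi*real k" by simp
  show ?thesis unfolding lam_def using power_strict_mono[OF a b, of 2] by simp
qed
lemma lam_mono_le: assumes "k \<le> l" shows "lam k \<le> lam l"
proof -
  have a: "2*pi*real k \<le> 2*pi*real l" using assms by simp
  have b: "0 \<le> 2*pi*real k" by simp
  show ?thesis unfolding lam_def using power_mono[OF a b, of 2] by simp
qed
lemma Tf_deriv: "(Tf m has_real_derivative Df m x) (at x)"
proof -
  have "\<And>k. ((\<lambda>x. exp(-2*lam k*x)) has_real_derivative exp(-2*lam k*x) * (-2*lam k)) (at x)"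
    by (rule DERIV_fun_exp) (rule DERIV_cmult_Id)
  then have "((\<lambda>x. (\<Sum>k\<in>{1..m}. exp(-2*lam k*x))) has_real_derivative (\<Sum>k\<in>{1..m}. exp(-2*lam k*x) * (-2*lam k))) (at x)"
    by (intro DERIV_sum) 
  then have "((\<lambda>x. -(1/2) * (\<Sum>k\<in>{1..m}. exp(-2*lam k*x))) has_real_derivative
        -(1/2) * (\<Sum>k\<in>{1..m}. exp(-2*lam k*x) * (-2*lam k))) (at x)"
    by (rule DERIV_cmult)
  moreover have "-(1/2) * (\<Sum>k\<in>{1..m}. exp(-2*lam k*x) * (-2*lam k)) = Df m x"
    unfolding Df_def sum_distrib_left by (intro sum.cong) auto
  ultimately show ?thesis unfolding Tf_def[abs_def] by simp
qed
lemma Df_pos: "m > 0 \<Longrightarrow> Df m x > 0"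
  unfolding Df_def by (intro sum_pos) (auto intro!: mult_pos_pos lam_pos)

lemma Tf_neg: "m > 0 \<Longrightarrow> Tf m x < 0"
proof -
  assume "m > 0"
  then have "(\<Sum>k\<in>{1..m}. exp(-2*lam k*x)) > 0" by (intro sum_pos) auto
  then show ?thesis unfolding Tf_def by simp
qed

lemma Tf_strict_mono: "m > 0 \<Longrightarrow> strict_mono (Tf m)"
proof (rule strict_monoI)
  fix x y :: real assume "m > 0" "x < y"
  show "Tf m x < Tf m y"
    using DERIV_pos_imp_increasing[OF \<open>x < y\<close>, of "Tf m"] Tf_deriv Df_pos[OF \<open>m>0\<close>]
    by blast
qed

lemma Tf_cont: "continuous_on A (Tf m)"
  unfolding Tf_def by (intro continuous_intros)

lemma Tf_surj:
  assumes "m > 0" "t < 0" shows "\<exists>x. Tf m x = t"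
proof -
  have l1: "lam 1 > 0" by (simp add: lam_pos)
  define x1 where "x1 = (2*t - 1) / (2 * lam 1)"
  have eq: "-2 * lam 1 * x1 = 1 - 2*t" unfolding x1_def using l1 by (simp add: field_simps)
  have e1: "exp (-2 * lam 1 * x1) \<ge> -2*t" unfolding eq using exp_ge_add_one_self[of "1-2*t"] by linarith
  have "(\<Sum>k\<in>{1..m}. exp(-2*lam k*x1)) \<ge> (\<Sum>k\<in>{1}. exp(-2*lam k*x1))"
    by (intro sum_mono2) (use assms in auto)
  then have T1: "Tf m x1 \<le> t" using e1 unfolding Tf_def by simp
  define L where "L = ln (real m / (-2*t))"
  define y2 where "y2 = \<bar>L\<bar> / (2 * lam 1)"
  have y2: "y2 \<ge> 0" unfolding y2_def using l1 by simp
  have "-2 * lam 1 * y2 = - \<bar>L\<bar>" unfolding y2_def using l1 by simp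
  then have "exp (-2 * lam 1 * y2) \<le> exp (-L)" by simp
  also have "exp (-L) = (-2*t) / real m"
  proof -
    have tp: "-2*t > 0" using assms by simp
    have mp: "real m > 0" using assms by simp
    have pos: "real m / (-2*t) > 0" by (rule divide_pos_pos[OF mp tp])
    have "exp L = real m / (-2*t)" unfolding L_def using exp_ln[OF pos] .
    then show ?thesis using assms by (simp add: exp_minus)
  qed
  finally have e2: "exp (-2 * lam 1 * y2) \<le> (-2*t) / real m" .
  have "(\<Sum>k\<in>{1..m}. exp(-2*lam k*y2)) \<le> (\<Sum>k\<in>{1..m}. exp(-2*lam 1*(y2::real)))"
  proof (intro sum_mono)
    fix k assume "k \<in> {1..m}"
    then have "lam 1 \<le> lam k" by (intro lam_mono_le) auto
    then have "-2*lam k*y2 \<le> -2*lam 1*y2" using y2 by (intro mult_right_mono) auto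
    then show "exp(-2*lam k*y2) \<le> exp(-2*lam 1*y2)" by simp
  qed
  also have "\<dots> = real m * exp(-2*lam 1*y2)" by simp
  also have "\<dots> \<le> real m * ((-2*t) / real m)" using e2 assms by (intro mult_left_mono) auto
  also have "\<dots> = -2*t" using assms by simp
  finally have T2: "t \<le> Tf m y2" unfolding Tf_def by simp
  show ?thesis
  proof (cases "x1 \<le> y2")
    case True
    have "\<forall>x. x1 \<le> x \<and> x \<le> y2 \<longrightarrow> isCont (Tf m) x" using DERIV_isCont[OF Tf_deriv] by blast
    from IVT[of "Tf m" x1 t y2, OF T1 T2 True this] show ?thesis by blast
  next
    case False
    then have "Tf m y2 < Tf m x1" using Tf_strict_mono[OF assms(1)] by (simp add: strict_mono_def)
    then show ?thesis using T1 T2 by simp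
  qed
qed

lemma Tf_inj: "m > 0 \<Longrightarrow> Tf m a = Tf m b \<Longrightarrow> a = b"
  using Tf_strict_mono strict_mono_eq by metis

lemma sig_Tf: "m > 0 \<Longrightarrow> sig m (Tf m x) = x"
  unfolding sig_def by (rule the_equality) (auto dest: Tf_inj)

lemma Tf_sig: "m > 0 \<Longrightarrow> t < 0 \<Longrightarrow> Tf m (sig m t) = t"
  using Tf_surj sig_Tf by metis

lemma sig_cont: assumes "m > 0" "t < 0" shows "isCont (sig m) t"
proof -
  have "isCont (sig m) (Tf m (sig m t))"
  proof (rule isCont_inverse_function[where d=1 and x="sig m t" and f="Tf m" and g="sig m"])
    show "\<And>z. \<bar>z - sig m t\<bar> \<le> 1 \<Longrightarrow> sig m (Tf m z) = z" using sig_Tf[OF assms(1)] by blast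
    show "\<And>z. \<bar>z - sig m t\<bar> \<le> 1 \<Longrightarrow> isCont (Tf m) z" using DERIV_isCont[OF Tf_deriv] by blast
  qed simp
  then show ?thesis using Tf_sig[OF assms] by simp
qed

lemma sig_deriv: assumes "m > 0" "t < 0"
  shows "(sig m has_real_derivative inverse (Df m (sig m t))) (at t)"
proof (rule DERIV_inverse_function[where a="t-1" and b=0 and f="Tf m"])
  show "(Tf m has_real_derivative Df m (sig m t)) (at (sig m t))" by (rule Tf_deriv)
  show "Df m (sig m t) \<noteq> 0" using Df_pos[OF assms(1)] by (metis less_irrefl)
  show "t - 1 < t" by simp
  show "t < 0" by fact
  show "\<And>y. t - 1 < y \<Longrightarrow> y < 0 \<Longrightarrow> Tf m (sig m y) = y" using Tf_sig[OF assms(1)] by blast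
  show "isCont (sig m) t" by (rule sig_cont[OF assms])
qed

lemma sig_le: assumes "m > 0" "t < 0" "Tf m M \<le> t" shows "M \<le> sig m t"
proof (rule ccontr)
  assume "\<not> M \<le> sig m t"
  then have "Tf m (sig m t) < Tf m M" using Tf_strict_mono[OF assms(1)] by (simp add: strict_mono_def)
  then show False using Tf_sig[OF assms(1,2)] assms(3) by simp
qed

lemma sig_at_top: assumes "m > 0" shows "filterlim (sig m) at_top (at_left 0)"
proof (subst filterlim_at_top, intro allI)
  fix M
  show "eventually (\<lambda>t. M \<le> sig m t) (at_left (0::real))"
    unfolding eventually_at_left_field
    by (rule exI[of _ "Tf m M"]) (use assms Tf_neg sig_le in auto)
qed





lemma cos_add_2pin: "cos (x + 2*pi*real k) = cos x"
proof (induction k)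
  case (Suc k)
  have "cos (x + 2*pi*real (Suc k)) = cos ((x + 2*pi*real k) + 2*pi)" by (simp add: algebra_simps)
  then show ?case using Suc cos_periodic by simp
qed simp

lemma sin_add_2pin: "sin (x + 2*pi*real k) = sin x"
proof (induction k)
  case (Suc k)
  have "sin (x + 2*pi*real (Suc k)) = sin ((x + 2*pi*real k) + 2*pi)" by (simp add: algebra_simps)
  then show ?case using Suc sin_periodic by simp
qed simp

definition V :: "(nat \<Rightarrow> 'a::real_vector) \<Rightarrow> (nat \<Rightarrow> 'a) \<Rightarrow> nat set \<Rightarrow> (nat \<Rightarrow> real) \<Rightarrow> (nat \<Rightarrow> real) \<Rightarrow> 'a"
  where "V P Q K x y = (\<Sum>k\<in>K. x k *\<^sub>R P k + y k *\<^sub>R Q k)"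

definition orthoPQ :: "nat set \<Rightarrow> (nat \<Rightarrow> 'a::real_inner) \<Rightarrow> (nat \<Rightarrow> 'a) \<Rightarrow> bool" where
  "orthoPQ K P Q \<longleftrightarrow> (\<forall>k\<in>K. \<forall>l\<in>K. P k \<bullet> P l = (if k = l then 1 else 0) \<and>
      Q k \<bullet> Q l = (if k = l then 1 else 0) \<and> P k \<bullet> Q l = 0)"

lemma inner_V:
  assumes "finite K" "orthoPQ K P Q"
  shows "V P Q K x y \<bullet> V P Q K x' y' = (\<Sum>k\<in>K. x k * x' k + y k * y' k)"
proof -
  have "V P Q K x y \<bullet> V P Q K x' y' =
     (\<Sum>k\<in>K. \<Sum>l\<in>K. (x k *\<^sub>R P k + y k *\<^sub>R Q k) \<bullet> (x' l *\<^sub>R P l + y' l *\<^sub>R Q l))"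
    unfolding V_def inner_sum_left inner_sum_right by (rule sum.swap)
  also have "\<dots> = (\<Sum>k\<in>K. \<Sum>l\<in>K. if k = l then x k * x' k + y k * y' k else 0)"
  proof (intro sum.cong refl)
    fix k l assume "k \<in> K" "l \<in> K"
    then have o: "P k \<bullet> P l = (if k = l then 1 else 0)" "Q k \<bullet> Q l = (if k = l then 1 else 0)"
      "P k \<bullet> Q l = 0" "Q k \<bullet> P l = 0"
      using assms(2) unfolding orthoPQ_def by (auto simp: inner_commute)
    show "(x k *\<^sub>R P k + y k *\<^sub>R Q k) \<bullet> (x' l *\<^sub>R P l + y' l *\<^sub>R Q l) =
       (if k = l then x k * x' k + y k * y' k else 0)"
      by (simp add: inner_add_left inner_add_right o)
  qed
  also have "\<dots> = (\<Sum>k\<in>K. x k * x' k + y k * y' k)"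
    using assms(1) by (simp add: sum.delta sum.delta')
  finally show ?thesis .
qed

lemma V_scale: "c *\<^sub>R V P Q K x y = V P Q K (\<lambda>k. c * x k) (\<lambda>k. c * y k)"
  unfolding V_def scaleR_sum_right by (simp add: scaleR_add_right)

lemma V_diff: "V P Q K x y - V P Q K x' y' = V P Q K (\<lambda>k. x k - x' k) (\<lambda>k. y k - y' k)"
  unfolding V_def sum_subtractf[symmetric] by (intro sum.cong) (auto simp: algebra_simps)

lemma V_cong: "(\<And>k. k \<in> K \<Longrightarrow> x k = x' k) \<Longrightarrow> (\<And>k. k \<in> K \<Longrightarrow> y k = y' k) \<Longrightarrow>
   V P Q K x y = V P Q K x' y'"
  unfolding V_def by simp

lemma V_deriv:
  assumes "\<And>k. k \<in> K \<Longrightarrow> ((\<lambda>s. x s k) has_real_derivative x' k) (at s0)"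
          "\<And>k. k \<in> K \<Longrightarrow> ((\<lambda>s. y s k) has_real_derivative y' k) (at s0)"
  shows "((\<lambda>s. V P Q K (x s) (y s)) has_vector_derivative V P Q K x' y') (at s0)"
  unfolding V_def
proof (rule has_vector_derivative_sum)
  fix k assume k: "k \<in> K"
  have a: "((\<lambda>s. x s k *\<^sub>R P k) has_vector_derivative x' k *\<^sub>R P k) (at s0)"
    using has_vector_derivative_scaleR[OF assms(1)[OF k] has_vector_derivative_const[of "P k"]] by simp
  have b: "((\<lambda>s. y s k *\<^sub>R Q k) has_vector_derivative y' k *\<^sub>R Q k) (at s0)"
    using has_vector_derivative_scaleR[OF assms(2)[OF k] has_vector_derivative_const[of "Q k"]] by simp
  show "((\<lambda>s. x s k *\<^sub>R P k + y s k *\<^sub>R Q k) has_vector_derivative x' k *\<^sub>R P k + y' k *\<^sub>R Q k) (at s0)"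
    by (rule has_vector_derivative_add[OF a b])
qed

lemma norm_V:
  assumes "finite K" "orthoPQ K P Q"
  shows "(norm (V P Q K x y))\<^sup>2 = (\<Sum>k\<in>K. (x k)\<^sup>2 + (y k)\<^sup>2)"
  unfolding power2_norm_eq_inner inner_V[OF assms] by (simp add: power2_eq_square)

definition om :: "nat \<Rightarrow> real" where "om k = 2*pi*real k"
definition rr :: "nat \<Rightarrow> real \<Rightarrow> nat \<Rightarrow> real" where "rr m t k = exp(-lam k * sig m t)"

definition gam :: "nat \<Rightarrow> (nat \<Rightarrow> 'a::real_vector) \<Rightarrow> (nat \<Rightarrow> 'a) \<Rightarrow> real \<Rightarrow> real \<Rightarrow> 'a" where
  "gam m P Q t u = V P Q {1..m} (\<lambda>k. rr m t k * cos (om k * u)) (\<lambda>k. rr m t k * sin (om k * u))"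
definition gamu :: "nat \<Rightarrow> (nat \<Rightarrow> 'a::real_vector) \<Rightarrow> (nat \<Rightarrow> 'a) \<Rightarrow> real \<Rightarrow> real \<Rightarrow> 'a" where
  "gamu m P Q t u = V P Q {1..m} (\<lambda>k. - (rr m t k * om k * sin (om k * u))) (\<lambda>k. rr m t k * om k * cos (om k * u))"
definition gamuu :: "nat \<Rightarrow> (nat \<Rightarrow> 'a::real_vector) \<Rightarrow> (nat \<Rightarrow> 'a) \<Rightarrow> real \<Rightarrow> real \<Rightarrow> 'a" where
  "gamuu m P Q t u = V P Q {1..m} (\<lambda>k. - (rr m t k * lam k * cos (om k * u))) (\<lambda>k. - (rr m t k * lam k * sin (om k * u)))"
definition gamt :: "nat \<Rightarrow> (nat \<Rightarrow> 'a::real_vector) \<Rightarrow> (nat \<Rightarrow> 'a) \<Rightarrow> real \<Rightarrow> real \<Rightarrow> 'a" where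
  "gamt m P Q t u = V P Q {1..m} (\<lambda>k. - (rr m t k * lam k * cos (om k * u)) / Df m (sig m t))
                                 (\<lambda>k. - (rr m t k * lam k * sin (om k * u)) / Df m (sig m t))"

lemma lam_om: "lam k = (om k)\<^sup>2" unfolding lam_def om_def ..

lemma gam_du: "((\<lambda>u. gam m P Q t u) has_vector_derivative gamu m P Q t u) (at u)"
  unfolding gam_def gamu_def
  by (rule V_deriv) (auto intro!: derivative_eq_intros)

lemma gamu_du: "((\<lambda>u. gamu m P Q t u) has_vector_derivative gamuu m P Q t u) (at u)"
  unfolding gamuu_def gamu_def
  by (rule V_deriv) (auto intro!: derivative_eq_intros simp: lam_om power2_eq_square)

lemma rr_dt: assumes "m > 0" "t < 0"
  shows "((\<lambda>s. rr m s k) has_real_derivative rr m t k * (- lam k * inverse (Df m (sig m t)))) (at t)"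
  unfolding rr_def
  by (auto intro!: derivative_eq_intros sig_deriv[OF assms])

lemma gam_dt: assumes "m > 0" "t < 0"
  shows "((\<lambda>s. gam m P Q s u) has_vector_derivative gamt m P Q t u) (at t)"
  unfolding gam_def gamt_def
  by (rule V_deriv) (auto intro!: derivative_eq_intros rr_dt[OF assms] simp: field_simps)

lemma rr_sq: "(rr m t k)\<^sup>2 = exp (-2 * lam k * sig m t)"
  unfolding rr_def power2_eq_square exp_add[symmetric] by simp

lemma norm_gamu:
  assumes "orthoPQ {1..m} P Q"
  shows "(norm (gamu m P Q t u))\<^sup>2 = Df m (sig m t)"
proof -
  have "(norm (gamu m P Q t u))\<^sup>2 = (\<Sum>k\<in>{1..m}. (- (rr m t k * om k * sin (om k * u)))\<^sup>2 + (rr m t k * om k * cos (om k * u))\<^sup>2)"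
    unfolding gamu_def norm_V[OF finite_atLeastAtMost assms] ..
  also have "\<dots> = (\<Sum>k\<in>{1..m}. (rr m t k)\<^sup>2 * (om k)\<^sup>2)"
  proof (intro sum.cong refl)
    fix k
    have "(- (rr m t k * om k * sin (om k * u)))\<^sup>2 + (rr m t k * om k * cos (om k * u))\<^sup>2
       = (rr m t k)\<^sup>2 * (om k)\<^sup>2 * ((sin (om k * u))\<^sup>2 + (cos (om k * u))\<^sup>2)"
      by (simp only: power_mult_distrib power2_minus distrib_left)
    then show "(- (rr m t k * om k * sin (om k * u)))\<^sup>2 + (rr m t k * om k * cos (om k * u))\<^sup>2
       = (rr m t k)\<^sup>2 * (om k)\<^sup>2" unfolding sin_cos_squared_add by simp
  qed
  also have "\<dots> = Df m (sig m t)" unfolding Df_def rr_sq lam_om by (simp add: mult.commute)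
  finally show ?thesis .
qed

lemma gamuu_gamu:
  assumes "orthoPQ {1..m} P Q"
  shows "gamuu m P Q t u \<bullet> gamu m P Q t u = 0"
  unfolding gamu_def gamuu_def inner_V[OF finite_atLeastAtMost assms]
  by (simp add: algebra_simps)

lemma csf_eq:
  assumes "m > 0" "orthoPQ {1..m} P Q"
  shows "gamt m P Q t u = curvature_vector (gamu m P Q t u) (gamuu m P Q t u)"
proof -
  have "curvature_vector (gamu m P Q t u) (gamuu m P Q t u) = (1 / Df m (sig m t)) *\<^sub>R gamuu m P Q t u"
    unfolding curvature_vector_def norm_gamu[OF assms(2)] gamuu_gamu[OF assms(2)] by simp
  also have "\<dots> = gamt m P Q t u"
    unfolding gamuu_def gamt_def V_scale by (rule V_cong) auto
  finally show ?thesis by simp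
qed




lemma sig_cont_on: "m > 0 \<Longrightarrow> continuous_on {..<0} (sig m)"
  by (intro continuous_at_imp_continuous_on ballI sig_cont) auto

lemma gam_cont:
  fixes P Q :: "nat \<Rightarrow> 'a::real_normed_vector"
  assumes "m > 0"
  shows "continuous_on ({..<0} \<times> UNIV) (\<lambda>(t,u). gam m P Q t u)"
proof -
  have cs: "continuous_on ({..<0::real} \<times> (UNIV::real set)) (\<lambda>x. sig m (fst x))"
    by (rule continuous_on_compose2[OF sig_cont_on[OF assms] continuous_on_fst]) auto
  have "continuous_on ({..<0} \<times> UNIV) (\<lambda>x. gam m P Q (fst x) (snd x))"
    unfolding gam_def V_def rr_def
  proof (intro continuous_on_sum)
    fix k
    have e: "continuous_on ({..<0::real} \<times> (UNIV::real set)) (\<lambda>x. exp (- lam k * sig m (fst x)))"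
      by (intro continuous_on_exp continuous_on_mult continuous_on_const cs)
    have c: "continuous_on ({..<0::real} \<times> (UNIV::real set)) (\<lambda>x. cos (om k * snd x))"
      by (intro continuous_intros)
    have s: "continuous_on ({..<0::real} \<times> (UNIV::real set)) (\<lambda>x. sin (om k * snd x))"
      by (intro continuous_intros)
    show "continuous_on ({..<0} \<times> UNIV) (\<lambda>x. (exp (- lam k * sig m (fst x)) * cos (om k * snd x)) *\<^sub>R P k +
              (exp (- lam k * sig m (fst x)) * sin (om k * snd x)) *\<^sub>R Q k)"
      by (intro continuous_on_add continuous_on_scaleR continuous_on_mult continuous_on_const e c s)
  qed
  then show ?thesis by (simp add: case_prod_beta')
qed

lemma gam_periodic: "gam m P Q t (u + 1) = gam m P Q t u"
proof -
  have "\<And>k. om k * (u + 1) = om k * u + 2*pi*real k" unfolding om_def by (simp add: algebra_simps)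
  then show ?thesis unfolding gam_def
    by (intro V_cong) (simp_all add: cos_add_2pin sin_add_2pin)
qed

lemma gam_csf:
  assumes "m > 0" "orthoPQ {1..m} P Q"
  shows "ancient_closed_csf (gam m P Q :: real \<Rightarrow> real \<Rightarrow> 'a::euclidean_space)"
  unfolding ancient_closed_csf_def
proof (intro conjI allI impI)
  show "continuous_on ({..<0} \<times> UNIV) (\<lambda>(t,u). gam m P Q t u)" by (rule gam_cont[OF assms(1)])
  show "\<And>t u. t < 0 \<Longrightarrow> gam m P Q t (u + 1) = gam m P Q t u" by (rule gam_periodic)
  show "\<exists>\<gamma>u \<gamma>uu \<gamma>t. \<forall>t<0. \<forall>u.
        ((\<lambda>u. gam m P Q t u) has_vector_derivative \<gamma>u t u) (at u) \<and>
        ((\<lambda>u. \<gamma>u t u) has_vector_derivative \<gamma>uu t u) (at u) \<and>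
        ((\<lambda>s. gam m P Q s u) has_vector_derivative \<gamma>t t u) (at t) \<and>
        \<gamma>u t u \<noteq> 0 \<and>
        \<gamma>t t u = curvature_vector (\<gamma>u t u) (\<gamma>uu t u)"
  proof (intro exI allI impI conjI)
    fix t u :: real assume t: "t < 0"
    show "((\<lambda>u. gam m P Q t u) has_vector_derivative gamu m P Q t u) (at u)" by (rule gam_du)
    show "((\<lambda>u. gamu m P Q t u) has_vector_derivative gamuu m P Q t u) (at u)" by (rule gamu_du)
    show "((\<lambda>s. gam m P Q s u) has_vector_derivative gamt m P Q t u) (at t)" by (rule gam_dt[OF assms(1) t])
    show "gamu m P Q t u \<noteq> 0"
    proof
      assume "gamu m P Q t u = 0"
      then have "(norm (gamu m P Q t u))\<^sup>2 = 0" by simp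
      then show False using norm_gamu[OF assms(2)] Df_pos[OF assms(1)] by (metis less_irrefl)
    qed
    show "gamt m P Q t u = curvature_vector (gamu m P Q t u) (gamuu m P Q t u)"
      by (rule csf_eq[OF assms])
  qed
qed



lemma exp_lim_top: assumes "(c::real) > 0" shows "((\<lambda>x. exp(-(c*x))) \<longlongrightarrow> 0) at_top"
proof -
  have "LIM x at_top. c*x :> at_top"
    by (rule filterlim_tendsto_pos_mult_at_top[OF tendsto_const assms filterlim_ident])
  then have "LIM x at_top. -(c*x) :> at_bot" using filterlim_uminus_at_bot[of "\<lambda>x. -(c*x)"] by simp
  then show ?thesis by (rule filterlim_compose[OF exp_at_bot])
qed

lemma exp_lim_bot: assumes "(c::real) > 0" shows "((\<lambda>x. exp(c*x)) \<longlongrightarrow> 0) at_bot"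
  unfolding filterlim_at_bot_mirror using exp_lim_top[OF assms] by simp

definition RR :: "nat \<Rightarrow> real \<Rightarrow> real" where
  "RR m x = (\<Sum>j\<in>{2..m}. exp(-(2*(lam j - lam 1)*x)))"

lemma RR_lim: "(RR m \<longlongrightarrow> 0) at_top"
  unfolding RR_def[abs_def]
proof (rule tendsto_null_sum)
  fix j assume "j \<in> {2..m}"
  then have "lam 1 < lam j" by (intro lam_mono) auto
  then show "((\<lambda>x. exp(-(2*(lam j - lam 1)*x))) \<longlongrightarrow> 0) at_top"
    using exp_lim_top[of "2*(lam j - lam 1)"] by simp
qed

lemma RR_nonneg: "RR m x \<ge> 0" unfolding RR_def by (intro sum_nonneg) auto

lemma sum_split: assumes "m > 0"
  shows "(\<Sum>j\<in>{1..m}. exp(-2*lam j*x)) = exp(-2*lam 1*x) * (1 + RR m x)"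
proof -
  have "{1..m} = insert 1 {2..m}" using assms by auto
  then have "(\<Sum>j\<in>{1..m}. exp(-2*lam j*x)) = exp(-2*lam 1*x) + (\<Sum>j\<in>{2..m}. exp(-2*lam j*x))" by simp
  also have "(\<Sum>j\<in>{2..m}. exp(-2*lam j*x)) = exp(-2*lam 1*x) * RR m x"
    unfolding RR_def sum_distrib_left
  proof (intro sum.cong refl)
    fix j
    have "-2*lam j*x = -2*lam 1*x + -(2*(lam j - lam 1)*x)" by (simp add: algebra_simps)
    then show "exp(-2*lam j*x) = exp(-2*lam 1*x) * exp(-(2*(lam j - lam 1)*x))"
      by (simp add: exp_add[symmetric])
  qed
  finally show ?thesis by (simp add: algebra_simps)
qed

definition ck :: "nat \<Rightarrow> real" where "ck k = (if k = 1 then sqrt 2 else 0)"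

lemma G_eq: assumes "m > 0" "k \<in> {1..m}"
  shows "exp(-lam k*x) / sqrt (- Tf m x) = sqrt (2 * exp(-(2*(lam k - lam 1)*x)) / (1 + RR m x))"
proof -
  have r: "1 + RR m x > 0" using RR_nonneg[of m x] by linarith
  have A: "- Tf m x = (1/2) * (exp(-2*lam 1*x) * (1 + RR m x))" unfolding Tf_def sum_split[OF assms(1)] by simp
  have B: "exp(-lam k*x) = sqrt (exp(-2*lam k*x))"
  proof -
    have sq: "exp(-2*lam k*x) = (exp(-lam k*x))\<^sup>2" unfolding power2_eq_square exp_add[symmetric] by simp
    show ?thesis unfolding sq by simp
  qed
  have "exp(-lam k*x) / sqrt (- Tf m x) = sqrt (exp(-2*lam k*x) / ((1/2) * (exp(-2*lam 1*x) * (1 + RR m x))))"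
    unfolding A B by (simp only: real_sqrt_divide)
  also have "exp(-2*lam k*x) / ((1/2) * (exp(-2*lam 1*x) * (1 + RR m x))) = 2 * exp(-(2*(lam k - lam 1)*x)) / (1 + RR m x)"
  proof -
    have "exp(-2*lam k*x) = exp(-2*lam 1*x) * exp(-(2*(lam k - lam 1)*x))"
      by (simp add: exp_add[symmetric] algebra_simps)
    moreover have "\<And>E F R::real. E > 0 \<Longrightarrow> 1 + R > 0 \<Longrightarrow> E * F / ((1/2) * (E * (1 + R))) = 2 * F / (1 + R)"
    proof -
      fix E F R :: real assume "E > 0" "1 + R > 0"
      then have "E * (1 + R) > 0" by simp
      then have n1: "E + E * R \<noteq> 0" by (simp add: algebra_simps)
      have n2: "E \<noteq> 0" "1 + R \<noteq> 0" using \<open>E > 0\<close> \<open>1 + R > 0\<close> by auto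
      from n1 n2 show "E * F / ((1/2) * (E * (1 + R))) = 2 * F / (1 + R)" by (simp add: field_simps)
    qed
    ultimately show ?thesis using r by simp
  qed
  finally show ?thesis .
qed

lemma G_lim: assumes "m > 0" "k \<in> {1..m}"
  shows "((\<lambda>x. exp(-lam k*x) / sqrt (- Tf m x)) \<longlongrightarrow> ck k) at_top"
proof -
  have e: "((\<lambda>x. exp(-(2*(lam k - lam 1)*x))) \<longlongrightarrow> (if k = 1 then 1 else 0)) at_top"
  proof (cases "k = 1")
    case True then show ?thesis by simp
  next
    case False
    then have "lam 1 < lam k" using assms(2) by (intro lam_mono) auto
    then show ?thesis using False exp_lim_top[of "2*(lam k - lam 1)"] by simp
  qed
  have "((\<lambda>x. sqrt (2 * exp(-(2*(lam k - lam 1)*x)) / (1 + RR m x))) \<longlongrightarrow>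
          sqrt (2 * (if k = 1 then 1 else 0) / (1 + 0))) at_top"
    by (intro tendsto_intros e RR_lim) simp
  moreover have "sqrt (2 * (if k = 1 then 1 else 0) / (1 + 0)) = ck k" unfolding ck_def by simp
  ultimately show ?thesis using G_eq[OF assms] by simp
qed

lemma rr_lim: assumes "m > 0" "k \<in> {1..m}"
  shows "((\<lambda>t. rr m t k / sqrt (-t)) \<longlongrightarrow> ck k) (at_left 0)"
proof -
  have "((\<lambda>t. exp(-lam k * sig m t) / sqrt (- Tf m (sig m t))) \<longlongrightarrow> ck k) (at_left 0)"
    by (rule filterlim_compose[OF G_lim[OF assms] sig_at_top[OF assms(1)]])
  moreover have "eventually (\<lambda>t. exp(-lam k * sig m t) / sqrt (- Tf m (sig m t)) = rr m t k / sqrt (-t)) (at_left (0::real))"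
    unfolding eventually_at_left_field
    by (rule exI[of _ "-1"]) (auto simp: rr_def Tf_sig[OF assms(1)])
  ultimately show ?thesis by (rule tendsto_cong[THEN iffD1, rotated])
qed



lemma norm_cs: assumes "finite K" "orthoPQ K P Q"
  shows "norm (V P Q K (\<lambda>k. a k * cos (w k)) (\<lambda>k. a k * sin (w k))) = sqrt (\<Sum>k\<in>K. (a k)\<^sup>2)"
proof -
  have "(norm (V P Q K (\<lambda>k. a k * cos (w k)) (\<lambda>k. a k * sin (w k))))\<^sup>2 = (\<Sum>k\<in>K. (a k)\<^sup>2)"
    unfolding norm_V[OF assms]
  proof (intro sum.cong refl)
    fix k
    have "(a k * cos (w k))\<^sup>2 + (a k * sin (w k))\<^sup>2 = (a k)\<^sup>2 * ((sin (w k))\<^sup>2 + (cos (w k))\<^sup>2)"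
      by (simp only: power_mult_distrib distrib_left add.commute)
    then show "(a k * cos (w k))\<^sup>2 + (a k * sin (w k))\<^sup>2 = (a k)\<^sup>2" unfolding sin_cos_squared_add by simp
  qed
  from real_sqrt_unique[OF this norm_ge_zero] show ?thesis by simp
qed

lemma norm_sc: assumes "finite K" "orthoPQ K P Q"
  shows "norm (V P Q K (\<lambda>k. - (a k * sin (w k))) (\<lambda>k. a k * cos (w k))) = sqrt (\<Sum>k\<in>K. (a k)\<^sup>2)"
proof -
  have "(norm (V P Q K (\<lambda>k. - (a k * sin (w k))) (\<lambda>k. a k * cos (w k))))\<^sup>2 = (\<Sum>k\<in>K. (a k)\<^sup>2)"
    unfolding norm_V[OF assms]
  proof (intro sum.cong refl)
    fix k
    have "(- (a k * sin (w k)))\<^sup>2 + (a k * cos (w k))\<^sup>2 = (a k)\<^sup>2 * ((sin (w k))\<^sup>2 + (cos (w k))\<^sup>2)"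
      by (simp only: power_mult_distrib power2_minus distrib_left)
    then show "(- (a k * sin (w k)))\<^sup>2 + (a k * cos (w k))\<^sup>2 = (a k)\<^sup>2" unfolding sin_cos_squared_add by simp
  qed
  from real_sqrt_unique[OF this norm_ge_zero] show ?thesis by simp
qed

lemma circle_V: assumes "m > 0"
  shows "circle_param (P 1) (Q 1) u = V P Q {1..m} (\<lambda>k. ck k * cos (om k * u)) (\<lambda>k. ck k * sin (om k * u))"
proof -
  have "V P Q {1..m} (\<lambda>k. ck k * cos (om k * u)) (\<lambda>k. ck k * sin (om k * u)) =
     (\<Sum>k\<in>{1..m}. if k = 1 then (sqrt 2 * cos (om 1 * u)) *\<^sub>R P 1 + (sqrt 2 * sin (om 1 * u)) *\<^sub>R Q 1 else 0)"
    unfolding V_def by (intro sum.cong refl) (simp add: ck_def)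
  also have "\<dots> = (sqrt 2 * cos (om 1 * u)) *\<^sub>R P 1 + (sqrt 2 * sin (om 1 * u)) *\<^sub>R Q 1"
    using assms by (simp add: sum.delta')
  also have "\<dots> = circle_param (P 1) (Q 1) u"
    unfolding circle_param_def om_def by (simp add: scaleR_add_right)
  finally show ?thesis by simp
qed

lemma circle_deriv: assumes "m > 0"
  shows "vector_derivative (circle_param (P 1) (Q 1)) (at u) =
    V P Q {1..m} (\<lambda>k. - (ck k * om k * sin (om k * u))) (\<lambda>k. ck k * om k * cos (om k * u))"
proof -
  have eq: "circle_param (P 1) (Q 1) = (\<lambda>u. V P Q {1..m} (\<lambda>k. ck k * cos (om k * u)) (\<lambda>k. ck k * sin (om k * u)))"
    using circle_V[OF assms] by auto
  have "((\<lambda>u. V P Q {1..m} (\<lambda>k. ck k * cos (om k * u)) (\<lambda>k. ck k * sin (om k * u))) has_vector_derivative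
     V P Q {1..m} (\<lambda>k. - (ck k * om k * sin (om k * u))) (\<lambda>k. ck k * om k * cos (om k * u))) (at u)"
    by (rule V_deriv) (auto intro!: derivative_eq_intros)
  then show ?thesis unfolding eq by (rule vector_derivative_at)
qed

lemma D1: "(1 / sqrt (-t)) *\<^sub>R gam m P Q t u - circle_param (P 1) (Q 1) u =
   V P Q {1..m} (\<lambda>k. (rr m t k / sqrt (-t) - ck k) * cos (om k * u)) (\<lambda>k. (rr m t k / sqrt (-t) - ck k) * sin (om k * u))"
  if "m > 0"
  unfolding circle_V[OF that] gam_def V_scale V_diff by (rule V_cong) (simp_all add: algebra_simps)

lemma D2: "(1 / sqrt (-t)) *\<^sub>R gamu m P Q t u - vector_derivative (circle_param (P 1) (Q 1)) (at u) =
   V P Q {1..m} (\<lambda>k. - ((rr m t k / sqrt (-t) - ck k) * om k * sin (om k * u))) (\<lambda>k. (rr m t k / sqrt (-t) - ck k) * om k * cos (om k * u))"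
  if "m > 0"
  unfolding circle_deriv[OF that] gamu_def V_scale V_diff by (rule V_cong) (simp_all add: algebra_simps)

lemma E_lim: assumes "m > 0"
  shows "((\<lambda>t. \<Sum>k\<in>{1..m}. (rr m t k / sqrt (-t) - ck k)\<^sup>2) \<longlongrightarrow> 0) (at_left 0)"
        "((\<lambda>t. \<Sum>k\<in>{1..m}. ((rr m t k / sqrt (-t) - ck k) * om k)\<^sup>2) \<longlongrightarrow> 0) (at_left 0)"
proof -
  show "((\<lambda>t. \<Sum>k\<in>{1..m}. (rr m t k / sqrt (-t) - ck k)\<^sup>2) \<longlongrightarrow> 0) (at_left 0)"
  proof (rule tendsto_null_sum)
    fix k assume k: "k \<in> {1..m}"
    have "((\<lambda>t. (rr m t k / sqrt (-t) - ck k)\<^sup>2) \<longlongrightarrow> (ck k - ck k)\<^sup>2) (at_left 0)"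
      by (intro tendsto_intros rr_lim[OF assms k])
    then show "((\<lambda>t. (rr m t k / sqrt (-t) - ck k)\<^sup>2) \<longlongrightarrow> 0) (at_left 0)" by simp
  qed
  show "((\<lambda>t. \<Sum>k\<in>{1..m}. ((rr m t k / sqrt (-t) - ck k) * om k)\<^sup>2) \<longlongrightarrow> 0) (at_left 0)"
  proof (rule tendsto_null_sum)
    fix k assume k: "k \<in> {1..m}"
    have "((\<lambda>t. ((rr m t k / sqrt (-t) - ck k) * om k)\<^sup>2) \<longlongrightarrow> ((ck k - ck k) * om k)\<^sup>2) (at_left 0)"
      by (intro tendsto_intros rr_lim[OF assms k])
    then show "((\<lambda>t. ((rr m t k / sqrt (-t) - ck k) * om k)\<^sup>2) \<longlongrightarrow> 0) (at_left 0)" by simp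
  qed
qed

lemma sqrt_lt: "x < e\<^sup>2 \<Longrightarrow> e > 0 \<Longrightarrow> sqrt x < (e::real)"
  by (metis abs_of_pos real_sqrt_abs real_sqrt_less_mono)

lemma gam_tangent:
  fixes P Q :: "nat \<Rightarrow> 'a::euclidean_space"
  assumes "m > 0" "orthoPQ {1..m} P Q"
  shows "tangent_flow_is_circle (gam m P Q)"
  unfolding tangent_flow_is_circle_def
proof (rule exI[of _ "P 1"], rule exI[of _ "Q 1"], rule exI[of _ "\<lambda>t u. u"],
       rule exI[of _ "\<lambda>t u. (1 / sqrt (-t)) *\<^sub>R gamu m P Q t u"], intro conjI allI impI)
  have o1: "1 \<in> {1..m}" using assms(1) by simp
  have pp: "P 1 \<bullet> P 1 = 1" "Q 1 \<bullet> Q 1 = 1" "P 1 \<bullet> Q 1 = 0"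
    using assms(2) o1 unfolding orthoPQ_def by auto
  show "norm (P 1) = 1" using pp by (simp add: norm_eq_sqrt_inner)
  show "norm (Q 1) = 1" using pp by (simp add: norm_eq_sqrt_inner)
  show "P 1 \<bullet> Q 1 = 0" by (rule pp(3))
  fix t :: real assume "t < 0"
  show "strict_mono (\<lambda>u::real. u)" by (simp add: strict_mono_def)
  show "continuous_on UNIV (\<lambda>u::real. u)" by (rule continuous_on_id)
  show "\<And>u. u + 1 = u + 1" by simp
  show "\<And>u. ((\<lambda>u. (1 / sqrt (-t)) *\<^sub>R gam m P Q t u) has_vector_derivative (1 / sqrt (-t)) *\<^sub>R gamu m P Q t u) (at u)"
    using has_vector_derivative_scaleR[OF DERIV_const gam_du] by simp
next
  fix e :: real assume e: "e > 0"
  have e2: "e\<^sup>2 > 0" using e by simp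
  have "eventually (\<lambda>t. (\<Sum>k\<in>{1..m}. (rr m t k / sqrt (-t) - ck k)\<^sup>2) < e\<^sup>2) (at_left (0::real))"
    by (rule order_tendstoD(2)[OF E_lim(1)[OF assms(1)] e2])
  moreover have "eventually (\<lambda>t. (\<Sum>k\<in>{1..m}. ((rr m t k / sqrt (-t) - ck k) * om k)\<^sup>2) < e\<^sup>2) (at_left (0::real))"
    by (rule order_tendstoD(2)[OF E_lim(2)[OF assms(1)] e2])
  ultimately have "eventually (\<lambda>t. (\<Sum>k\<in>{1..m}. (rr m t k / sqrt (-t) - ck k)\<^sup>2) < e\<^sup>2 \<and>
      (\<Sum>k\<in>{1..m}. ((rr m t k / sqrt (-t) - ck k) * om k)\<^sup>2) < e\<^sup>2) (at_left (0::real))"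
    by (rule eventually_conj)
  then obtain b where b: "b < 0" and hb: "\<And>t. b < t \<Longrightarrow> t < 0 \<Longrightarrow>
      (\<Sum>k\<in>{1..m}. (rr m t k / sqrt (-t) - ck k)\<^sup>2) < e\<^sup>2 \<and>
      (\<Sum>k\<in>{1..m}. ((rr m t k / sqrt (-t) - ck k) * om k)\<^sup>2) < e\<^sup>2"
    unfolding eventually_at_left_field by blast
  show "\<exists>\<delta>>0. \<forall>t. - \<delta> < t \<and> t < 0 \<longrightarrow> (\<forall>u.
            norm ((1 / sqrt (-t)) *\<^sub>R gam m P Q t u - circle_param (P 1) (Q 1) u) < e \<and>
            norm ((1 / sqrt (-t)) *\<^sub>R gamu m P Q t u - vector_derivative (circle_param (P 1) (Q 1)) (at u)) < e)"
  proof (intro exI[of _ "-b"] conjI allI impI)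
    show "- b > 0" using b by simp
    fix t u :: real assume t: "- (- b) < t \<and> t < 0"
    then have h: "(\<Sum>k\<in>{1..m}. (rr m t k / sqrt (-t) - ck k)\<^sup>2) < e\<^sup>2"
         "(\<Sum>k\<in>{1..m}. ((rr m t k / sqrt (-t) - ck k) * om k)\<^sup>2) < e\<^sup>2" using hb by auto
    show "norm ((1 / sqrt (-t)) *\<^sub>R gam m P Q t u - circle_param (P 1) (Q 1) u) < e"
      unfolding D1[OF assms(1)] norm_cs[OF finite_atLeastAtMost assms(2)] by (rule sqrt_lt[OF h(1) e])
    show "norm ((1 / sqrt (-t)) *\<^sub>R gamu m P Q t u - vector_derivative (circle_param (P 1) (Q 1)) (at u)) < e"
      unfolding D2[OF assms(1)]
      using norm_sc[OF finite_atLeastAtMost assms(2), of "\<lambda>k. (rr m t k / sqrt (-t) - ck k) * om k" "\<lambda>k. om k * u"]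
        sqrt_lt[OF h(2) e] by simp
  qed
qed



lemma exp_indep:
  fixes c :: "nat \<Rightarrow> real"
  assumes fin: "finite K" and pos: "\<And>k. k \<in> K \<Longrightarrow> k \<ge> 1"
    and eq: "\<And>x. (\<Sum>k\<in>K. c k * exp(-lam k * x)) = b"
  shows "\<forall>k\<in>K. c k = 0"
proof (rule ccontr)
  assume "\<not> (\<forall>k\<in>K. c k = 0)"
  define K' where "K' = {k\<in>K. c k \<noteq> 0}"
  have fK': "finite K'" unfolding K'_def using fin by simp
  have neK': "K' \<noteq> {}" unfolding K'_def using \<open>\<not> (\<forall>k\<in>K. c k = 0)\<close> by auto
  define M where "M = Max K'"
  have MK: "M \<in> K'" unfolding M_def using fK' neK' by (rule Max_in)
  have Mge: "\<And>k. k \<in> K' \<Longrightarrow> k \<le> M" unfolding M_def using fK' by simp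
  have cM: "c M \<noteq> 0" using MK unfolding K'_def by simp
  have M1: "M \<ge> 1" using MK pos unfolding K'_def by simp
  have eq': "\<And>x. (\<Sum>k\<in>K'. c k * exp((lam M - lam k) * x)) = b * exp(lam M * x)"
  proof -
    fix x
    have "(\<Sum>k\<in>K. c k * exp(-lam k * x)) = (\<Sum>k\<in>K'. c k * exp(-lam k * x))"
      by (rule sum.mono_neutral_right[OF fin]) (auto simp: K'_def)
    then have "(\<Sum>k\<in>K'. c k * exp(-lam k * x)) = b" using eq by simp
    then have "exp(lam M * x) * (\<Sum>k\<in>K'. c k * exp(-lam k * x)) = b * exp(lam M * x)" by simp
    moreover have "exp(lam M * x) * (\<Sum>k\<in>K'. c k * exp(-lam k * x)) = (\<Sum>k\<in>K'. c k * exp((lam M - lam k) * x))"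
      unfolding sum_distrib_left
    proof (intro sum.cong refl)
      fix k
      have "(lam M - lam k) * x = lam M * x + (-lam k * x)" by (simp add: algebra_simps)
      then have "exp((lam M - lam k) * x) = exp(lam M * x) * exp(-lam k * x)" by (simp only: exp_add)
      then show "exp(lam M * x) * (c k * exp(-lam k * x)) = c k * exp((lam M - lam k) * x)"
        by simp
    qed
    ultimately show "(\<Sum>k\<in>K'. c k * exp((lam M - lam k) * x)) = b * exp(lam M * x)" by (metis mult.commute)
  qed
  have L: "((\<lambda>x. \<Sum>k\<in>K'. c k * exp((lam M - lam k) * x)) \<longlongrightarrow> (\<Sum>k\<in>K'. if k = M then c k else 0)) at_bot"
  proof (intro tendsto_sum)
    fix k assume k: "k \<in> K'"
    show "((\<lambda>x. c k * exp((lam M - lam k) * x)) \<longlongrightarrow> (if k = M then c k else 0)) at_bot"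
    proof (cases "k = M")
      case True then show ?thesis by simp
    next
      case False
      then have "k < M" using Mge[OF k] by simp
      then have "lam M - lam k > 0" using lam_mono by simp
      from tendsto_mult[OF tendsto_const exp_lim_bot[OF this], of "c k"] False show ?thesis by simp
    qed
  qed
  have s: "(\<Sum>k\<in>K'. if k = M then c k else 0) = c M" using fK' MK by (simp add: sum.delta')
  have R: "((\<lambda>x. b * exp(lam M * x)) \<longlongrightarrow> b * 0) at_bot"
    by (intro tendsto_mult tendsto_const exp_lim_bot lam_pos M1)
  have "c M = 0"
    using tendsto_unique[OF trivial_limit_at_bot_linorder L[unfolded s] R[folded eq']] by simp
  then show False using cM by simp
qed

lemma inner_V_right: "a \<bullet> V P Q K x y = (\<Sum>k\<in>K. x k * (a \<bullet> P k) + y k * (a \<bullet> Q k))"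
  unfolding V_def inner_sum_right inner_add_right inner_scaleR_right ..

lemma not_hyper:
  assumes "m > 0" and hyp: "\<And>x u. a \<bullet> gam m P Q (Tf m x) u = b"
  shows "\<forall>k\<in>{1..m}. a \<bullet> P k = 0 \<and> a \<bullet> Q k = 0"
proof -
  have c0: "\<forall>k\<in>{1..m}. cos (om k * u) * (a \<bullet> P k) + sin (om k * u) * (a \<bullet> Q k) = 0" for u
  proof (rule exp_indep[where b=b])
    show "finite {1..m}" by simp
    show "\<And>k. k \<in> {1..m} \<Longrightarrow> k \<ge> 1" by simp
    fix x
    have "b = a \<bullet> gam m P Q (Tf m x) u" using hyp by simp
    also have "\<dots> = (\<Sum>k\<in>{1..m}. (cos (om k * u) * (a \<bullet> P k) + sin (om k * u) * (a \<bullet> Q k)) * exp(-lam k * x))"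
      unfolding gam_def inner_V_right rr_def sig_Tf[OF assms(1)] by (intro sum.cong refl) (simp add: algebra_simps)
    finally show "(\<Sum>k\<in>{1..m}. (cos (om k * u) * (a \<bullet> P k) + sin (om k * u) * (a \<bullet> Q k)) * exp(-lam k * x)) = b" by simp
  qed
  show ?thesis
  proof
    fix k assume k: "k \<in> {1..m}"
    have "a \<bullet> P k = 0" using c0[of 0] k by simp
    moreover
    {
      define u' where "u' = 1 / (4 * real k)"
      have h: "cos (om k * u') * (a \<bullet> P k) + sin (om k * u') * (a \<bullet> Q k) = 0" using c0[of u'] k by blast
      have e: "om k * u' = pi / 2" using k unfolding om_def u'_def by (simp add: field_simps)
      have "a \<bullet> Q k = 0" using h unfolding e by simp
    }
    ultimately show "a \<bullet> P k = 0 \<and> a \<bullet> Q k = 0" by simp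
  qed
qed



theorem corollary2p4:
  fixes m :: nat
  assumes "m > 0" and "CARD('n::finite) = 2 * m"
  shows "\<exists>\<gamma> :: real \<Rightarrow> real \<Rightarrow> real ^ 'n.
           ancient_closed_csf \<gamma> \<and>
           \<not> (\<exists>S. affine S \<and> aff_dim S = int (2 * m - 1) \<and>
                  (\<forall>t<0. \<forall>u. \<gamma> t u \<in> S)) \<and>
           tangent_flow_is_circle \<gamma>"
proof -
  have c: "card (UNIV :: 'n set) = 2 * m" using assms(2) by simp
  have fin: "finite (UNIV :: 'n set)" by (rule finite)
  from ex_bij_betw_nat_finite[OF fin] obtain h0 where h0: "bij_betw h0 {0..<card (UNIV :: 'n set)} (UNIV :: 'n set)" ..
  define h where "h = h0"
  have h: "bij_betw h {0..<2*m} (UNIV :: 'n set)" using h0 unfolding c h_def .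
  have hinj: "\<And>i j. i < 2*m \<Longrightarrow> j < 2*m \<Longrightarrow> h i = h j \<Longrightarrow> i = j"
  proof -
    fix i j assume "i < 2*m" "j < 2*m" "h i = h j"
    then show "i = j" using inj_onD[OF bij_betw_imp_inj_on[OF h], of i j] by simp
  qed
  define P :: "nat \<Rightarrow> real ^ 'n" where "P k = axis (h (2*k-2)) 1" for k
  define Q :: "nat \<Rightarrow> real ^ 'n" where "Q k = axis (h (2*k-1)) 1" for k
  have orth: "orthoPQ {1..m} P Q"
    unfolding orthoPQ_def
  proof (intro ballI conjI)
    fix k l assume k: "k \<in> {1..m}" and l: "l \<in> {1..m}"
    have b: "2*k-2 < 2*m" "2*l-2 < 2*m" "2*k-1 < 2*m" "2*l-1 < 2*m" using k l by auto
    have e1: "h (2*k-2) = h (2*l-2) \<longleftrightarrow> k = l"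
    proof
      assume "h (2*k-2) = h (2*l-2)" then have "2*k-2 = 2*l-2" using hinj b by blast
      then show "k = l" using k l by auto
    qed simp
    have e2: "h (2*k-1) = h (2*l-1) \<longleftrightarrow> k = l"
    proof
      assume "h (2*k-1) = h (2*l-1)" then have "2*k-1 = 2*l-1" using hinj b by blast
      then show "k = l" using k l by auto
    qed simp
    have e3: "h (2*k-2) \<noteq> h (2*l-1)"
    proof
      assume "h (2*k-2) = h (2*l-1)" then have "2*k-2 = 2*l-1" using hinj b by blast
      then show False using k l by presburger
    qed
    show "P k \<bullet> P l = (if k = l then 1 else 0)" unfolding P_def inner_axis_axis using e1 by simp
    show "Q k \<bullet> Q l = (if k = l then 1 else 0)" unfolding Q_def inner_axis_axis using e2 by simp
    show "P k \<bullet> Q l = 0" unfolding P_def Q_def inner_axis_axis using e3 by simp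
  qed
  show ?thesis
  proof (intro exI[of _ "gam m P Q"] conjI)
    show "ancient_closed_csf (gam m P Q :: real \<Rightarrow> real \<Rightarrow> real ^ 'n)" by (rule gam_csf[OF assms(1) orth])
    show "tangent_flow_is_circle (gam m P Q :: real \<Rightarrow> real \<Rightarrow> real ^ 'n)" by (rule gam_tangent[OF assms(1) orth])
    show "\<not> (\<exists>S. affine S \<and> aff_dim S = int (2 * m - 1) \<and> (\<forall>t<0. \<forall>u. gam m P Q t u \<in> S))"
    proof
      assume "\<exists>S. affine S \<and> aff_dim S = int (2 * m - 1) \<and> (\<forall>t<0. \<forall>u. gam m P Q t u \<in> S)"
      then obtain S where S: "affine S" "aff_dim S = int (2 * m - 1)" "\<forall>t<0. \<forall>u. gam m P Q t u \<in> S" by blast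
      have "aff_dim S = int (DIM(real ^ 'n) - 1)" using S(2) assms(2) by simp
      then obtain a b where ab: "a \<noteq> 0" "affine hull S = {x. a \<bullet> x = b}"
        unfolding aff_dim_eq_hyperplane by blast
      have "affine hull S = S" using S(1) by (rule affine_hull_eq[THEN iffD2])
      then have Sab: "S = {x. a \<bullet> x = b}" using ab(2) by simp
      have "\<And>x u. a \<bullet> gam m P Q (Tf m x) u = b"
      proof -
        fix x u
        have "gam m P Q (Tf m x) u \<in> S" using S(3) Tf_neg[OF assms(1), of x] by blast
        then show "a \<bullet> gam m P Q (Tf m x) u = b" unfolding Sab by simp
      qed
      then have z: "\<forall>k\<in>{1..m}. a \<bullet> P k = 0 \<and> a \<bullet> Q k = 0" by (rule not_hyper[OF assms(1)])
      have "a = 0"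
      proof (subst vec_eq_iff, intro allI)
        fix i :: 'n
        have "i \<in> h ` {0..<2*m}" using h unfolding bij_betw_def by simp
        then obtain j where j0: "j \<in> {0..<2*m}" "i = h j" by blast
        have j: "j < 2*m" "h j = i" using j0 by auto
        define k where "k = j div 2 + 1"
        have k: "k \<in> {1..m}" using j(1) unfolding k_def by auto
        show "a $ i = 0 $ i"
        proof (cases "even j")
          case True
          then have "2*k-2 = j" unfolding k_def by presburger
          then have "a \<bullet> P k = a $ i" unfolding P_def using j(2) by (simp add: inner_axis)
          then show ?thesis using z k by simp
        next
          case False
          then have "2*k-1 = j" unfolding k_def by presburger
          then have "a \<bullet> Q k = a $ i" unfolding Q_def using j(2) by (simp add: inner_axis)
          then show ?thesis using z k by simp
        qed
      qed
      then show False using ab(1) by simp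
    qed
  qed
qed


end
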